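(* Let $I\unlhd K[x_1,\dots,x_n]$ be a homogeneous ideal, let $w\in\mathbb R^n$, and let $J:=\operatorname{in}_{(-1,w)}(\pi^{-1}I)\unlhd R[t,x]$. Then there exists a weight vector $u\in(\mathbb R_{>0})^{n+1}$ such that $J$ is weighted homogeneous with respect to $u$, with $u$ assigning weights to $(t,x_1,\dots,x_n)$.
   Context: Let $K$ be a complete field with a non-trivial discrete valuation $\nu$ and a uniformizing parameter $p$. Let $\mathcal O_K$ be its ring of integers. Let $R\subseteq\mathcal O_K$ be a dense noetherian subring with $p\in R$. The map $\pi:R[[t]][x]\to\mathcal O_K[x]\subseteq K[x]$ sends $t\mapsto p$, and $\pi^{-1}I$ is the preimage of $I$. For $f=\sum c_{\alpha,\beta}t^\beta x^\alpha\in R[[t]][x]$ and $v\in\mathbb R_{<0}\times\mathbb R^n$, $\operatorname{in}_v(f)\in R[t,x]$ is the sum of the terms with $v\cdot(\beta,\alpha)$ maximal. $\operatorname{in}_v(J)$ is the ideal generated by these. An ideal is weighted homogeneous with respect to $u$ if it is generated by polynomials that are homogeneous with respect to the $u$-weighted degree. *)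

theory Defs
  imports Complex_Main "HOL-Library.Poly_Mapping"
    "HOL-Computational_Algebra.Polynomial" "HOL-Computational_Algebra.Formal_Power_Series"
begin

(* Multivariate polynomials in variables indexed by a finite type 'n are elements of
   the ring of finitely supported maps from exponent vectors ('n =>0 nat) to coefficients
   (Poly_Mapping; multiplication = convolution).
   K[x] : coefficients 'a;  R[[t]][x] : coefficients 'a fps with all coefficients in R;
   R[t,x] = R[t][x] : coefficients 'a poly with all coefficients in R. *)

definition ideal_gen_in :: "'b::comm_ring_1 set \<Rightarrow> 'b set \<Rightarrow> 'b set" where
  "ideal_gen_in A S = {y. \<exists>F c. finite F \<and> F \<subseteq> S \<and> (\<forall>s\<in>F. c s \<in> A) \<and> y = (\<Sum>s\<in>F. c s * s)}"

definition discrete_valuation :: "('a::field \<Rightarrow> int) \<Rightarrow> bool" where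
  "discrete_valuation nu \<longleftrightarrow>
     (\<forall>x y. x \<noteq> 0 \<longrightarrow> y \<noteq> 0 \<longrightarrow> nu (x * y) = nu x + nu y) \<and>
     (\<forall>x y. x \<noteq> 0 \<longrightarrow> y \<noteq> 0 \<longrightarrow> x + y \<noteq> 0 \<longrightarrow> nu (x + y) \<ge> min (nu x) (nu y)) \<and>
     (\<exists>x. x \<noteq> 0 \<and> nu x \<noteq> 0)"

definition uniformizer :: "('a::field \<Rightarrow> int) \<Rightarrow> 'a \<Rightarrow> bool" where
  "uniformizer nu p \<longleftrightarrow> p \<noteq> 0 \<and> nu p > 0 \<and> (\<forall>x. x \<noteq> 0 \<longrightarrow> nu x > 0 \<longrightarrow> nu p \<le> nu x)"

definition vclose :: "('a::field \<Rightarrow> int) \<Rightarrow> int \<Rightarrow> 'a \<Rightarrow> 'a \<Rightarrow> bool" where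
  "vclose nu N x y \<longleftrightarrow> x = y \<or> nu (x - y) \<ge> N"

definition vcauchy :: "('a::field \<Rightarrow> int) \<Rightarrow> (nat \<Rightarrow> 'a) \<Rightarrow> bool" where
  "vcauchy nu s \<longleftrightarrow> (\<forall>N. \<exists>M. \<forall>m\<ge>M. \<forall>k\<ge>M. vclose nu N (s m) (s k))"

definition vconverges :: "('a::field \<Rightarrow> int) \<Rightarrow> (nat \<Rightarrow> 'a) \<Rightarrow> 'a \<Rightarrow> bool" where
  "vconverges nu s L \<longleftrightarrow> (\<forall>N. \<exists>M. \<forall>m\<ge>M. vclose nu N (s m) L)"

definition vcomplete :: "('a::field \<Rightarrow> int) \<Rightarrow> bool" where
  "vcomplete nu \<longleftrightarrow> (\<forall>s. vcauchy nu s \<longrightarrow> (\<exists>L. vconverges nu s L))"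

definition val_ring :: "('a::field \<Rightarrow> int) \<Rightarrow> 'a set" where
  "val_ring nu = {x. x = 0 \<or> nu x \<ge> 0}"

definition is_subring :: "'a::comm_ring_1 set \<Rightarrow> bool" where
  "is_subring R \<longleftrightarrow> 0 \<in> R \<and> 1 \<in> R \<and> (\<forall>x\<in>R. \<forall>y\<in>R. x + y \<in> R \<and> x - y \<in> R \<and> x * y \<in> R)"

definition ideal_of :: "'a::comm_ring_1 set \<Rightarrow> 'a set \<Rightarrow> bool" where
  "ideal_of R J \<longleftrightarrow> J \<subseteq> R \<and> 0 \<in> J \<and> (\<forall>x\<in>J. \<forall>y\<in>J. x + y \<in> J) \<and> (\<forall>r\<in>R. \<forall>x\<in>J. r * x \<in> J)"

definition noetherian_subring :: "'a::comm_ring_1 set \<Rightarrow> bool" where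
  "noetherian_subring R \<longleftrightarrow> is_subring R \<and>
     (\<forall>J. ideal_of R J \<longrightarrow> (\<exists>F. finite F \<and> F \<subseteq> J \<and> J = ideal_gen_in R F))"

definition dense_in_val_ring :: "('a::field \<Rightarrow> int) \<Rightarrow> 'a set \<Rightarrow> bool" where
  "dense_in_val_ring nu R \<longleftrightarrow> (\<forall>x\<in>val_ring nu. \<forall>N. \<exists>r\<in>R. vclose nu N x r)"

definition RTx :: "'a::comm_ring_1 set \<Rightarrow> (('n \<Rightarrow>\<^sub>0 nat) \<Rightarrow>\<^sub>0 'a fps) set" where
  "RTx R = {f. \<forall>\<alpha> \<beta>. fps_nth (Poly_Mapping.lookup f \<alpha>) \<beta> \<in> R}"

definition RtX :: "'a::comm_ring_1 set \<Rightarrow> (('n \<Rightarrow>\<^sub>0 nat) \<Rightarrow>\<^sub>0 'a poly) set" where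
  "RtX R = {g. \<forall>\<alpha> \<beta>. coeff (Poly_Mapping.lookup g \<alpha>) \<beta> \<in> R}"

text \<open>Preimage of an ideal I of K[x] under pi : R[[t]][x] \<rightarrow> O_K[x], t \<mapsto> p.
  pi f has coefficient at alpha the (valuation-adic) sum of the series
  sum over beta of c_{alpha,beta} p^beta.\<close>
definition pi_preimage :: "('a::field \<Rightarrow> int) \<Rightarrow> 'a \<Rightarrow> 'a set \<Rightarrow> (('n \<Rightarrow>\<^sub>0 nat) \<Rightarrow>\<^sub>0 'a) set
     \<Rightarrow> (('n \<Rightarrow>\<^sub>0 nat) \<Rightarrow>\<^sub>0 'a fps) set" where
  "pi_preimage nu p R I = {f \<in> RTx R. \<exists>h\<in>I. \<forall>\<alpha>.
       vconverges nu (\<lambda>m. \<Sum>\<beta><m. fps_nth (Poly_Mapping.lookup f \<alpha>) \<beta> * p ^ \<beta>) (Poly_Mapping.lookup h \<alpha>)}"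

definition vweight :: "('n::finite \<Rightarrow> real) \<Rightarrow> nat \<Rightarrow> ('n \<Rightarrow>\<^sub>0 nat) \<Rightarrow> real" where
  "vweight w \<beta> \<alpha> = - real \<beta> + (\<Sum>i\<in>UNIV. w i * real (Poly_Mapping.lookup \<alpha> i))"

definition is_initial_form :: "('n::finite \<Rightarrow> real) \<Rightarrow> (('n \<Rightarrow>\<^sub>0 nat) \<Rightarrow>\<^sub>0 'a::comm_ring_1 fps)
     \<Rightarrow> (('n \<Rightarrow>\<^sub>0 nat) \<Rightarrow>\<^sub>0 'a poly) \<Rightarrow> bool" where
  "is_initial_form w f g \<longleftrightarrow> (\<forall>\<alpha> \<beta>. coeff (Poly_Mapping.lookup g \<alpha>) \<beta> =
      (if fps_nth (Poly_Mapping.lookup f \<alpha>) \<beta> \<noteq> 0 \<and>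
          (\<forall>\<alpha>' \<beta>'. fps_nth (Poly_Mapping.lookup f \<alpha>') \<beta>' \<noteq> 0 \<longrightarrow> vweight w \<beta>' \<alpha>' \<le> vweight w \<beta> \<alpha>)
       then fps_nth (Poly_Mapping.lookup f \<alpha>) \<beta> else 0))"

definition initial_ideal :: "'a::comm_ring_1 set \<Rightarrow> ('n::finite \<Rightarrow> real)
     \<Rightarrow> (('n \<Rightarrow>\<^sub>0 nat) \<Rightarrow>\<^sub>0 'a fps) set \<Rightarrow> (('n \<Rightarrow>\<^sub>0 nat) \<Rightarrow>\<^sub>0 'a poly) set" where
  "initial_ideal R w J = ideal_gen_in (RtX R) {g. \<exists>f\<in>J. is_initial_form w f g}"

definition homogeneous_poly :: "(('n::finite \<Rightarrow>\<^sub>0 nat) \<Rightarrow>\<^sub>0 'a::zero) \<Rightarrow> bool" where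
  "homogeneous_poly f \<longleftrightarrow> (\<exists>d. \<forall>\<alpha>. Poly_Mapping.lookup f \<alpha> \<noteq> 0 \<longrightarrow> (\<Sum>i\<in>UNIV. Poly_Mapping.lookup \<alpha> i) = d)"

definition homogeneous_ideal :: "(('n::finite \<Rightarrow>\<^sub>0 nat) \<Rightarrow>\<^sub>0 'a::comm_ring_1) set \<Rightarrow> bool" where
  "homogeneous_ideal I \<longleftrightarrow> (\<exists>S. (\<forall>s\<in>S. homogeneous_poly s) \<and> I = ideal_gen_in UNIV S)"

text \<open>u0 is the weight of t, u i the weight of x_i.\<close>
definition weighted_homogeneous_poly :: "real \<Rightarrow> ('n::finite \<Rightarrow> real)
     \<Rightarrow> (('n \<Rightarrow>\<^sub>0 nat) \<Rightarrow>\<^sub>0 'a::zero poly) \<Rightarrow> bool" where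
  "weighted_homogeneous_poly u0 u g \<longleftrightarrow> (\<exists>d. \<forall>\<alpha> \<beta>. coeff (Poly_Mapping.lookup g \<alpha>) \<beta> \<noteq> 0 \<longrightarrow>
       u0 * real \<beta> + (\<Sum>i\<in>UNIV. u i * real (Poly_Mapping.lookup \<alpha> i)) = d)"

definition weighted_homogeneous_ideal :: "'a::comm_ring_1 set \<Rightarrow> real \<Rightarrow> ('n::finite \<Rightarrow> real)
     \<Rightarrow> (('n \<Rightarrow>\<^sub>0 nat) \<Rightarrow>\<^sub>0 'a poly) set \<Rightarrow> bool" where
  "weighted_homogeneous_ideal R u0 u J \<longleftrightarrow>
     (\<exists>S. S \<subseteq> RtX R \<and> (\<forall>s\<in>S. weighted_homogeneous_poly u0 u s) \<and> J = ideal_gen_in (RtX R) S)"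

end

theory Submission imports Defs begin

definition degx :: "('n::finite \<Rightarrow>\<^sub>0 nat) \<Rightarrow> nat" where
  "degx \<alpha> = (\<Sum>i\<in>UNIV. Poly_Mapping.lookup \<alpha> i)"

definition hcomp :: "nat \<Rightarrow> (('n::finite \<Rightarrow>\<^sub>0 nat) \<Rightarrow>\<^sub>0 'b::zero) \<Rightarrow> (('n \<Rightarrow>\<^sub>0 nat) \<Rightarrow>\<^sub>0 'b)" where
  "hcomp d f = Abs_poly_mapping (\<lambda>\<alpha>. if degx \<alpha> = d then Poly_Mapping.lookup f \<alpha> else 0)"

lemma lookup_hcomp: "Poly_Mapping.lookup (hcomp d f) \<alpha> = (if degx \<alpha> = d then Poly_Mapping.lookup f \<alpha> else 0)"
proof -
  have "finite {\<alpha>. (if degx \<alpha> = d then Poly_Mapping.lookup f \<alpha> else 0) \<noteq> 0}"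
    by (rule finite_subset[OF _ finite_lookup[of f]]) auto
  then show ?thesis unfolding hcomp_def by simp
qed

lemma degx_add: "degx (a + b) = degx a + degx b"
  unfolding degx_def by (simp add: lookup_add sum.distrib)

definition homd :: "nat \<Rightarrow> (('n::finite \<Rightarrow>\<^sub>0 nat) \<Rightarrow>\<^sub>0 'b::zero) \<Rightarrow> bool" where
  "homd d f \<longleftrightarrow> (\<forall>\<alpha>\<in>Poly_Mapping.keys f. degx \<alpha> = d)"

lemma hcomp_add: "hcomp d (a + b) = hcomp d a + (hcomp d b :: _ \<Rightarrow>\<^sub>0 'b::monoid_add)"
  by (rule poly_mapping_eqI) (simp add: lookup_hcomp lookup_add)

lemma hcomp_sum: "hcomp d (\<Sum>x\<in>X. f x) = (\<Sum>x\<in>X. hcomp d (f x :: _ \<Rightarrow>\<^sub>0 'b::comm_monoid_add))"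
  by (rule poly_mapping_eqI) (simp add: lookup_hcomp lookup_sum)

lemma hcomp_homd_same: "homd d f \<Longrightarrow> hcomp d f = f"
  by (rule poly_mapping_eqI) (auto simp: lookup_hcomp homd_def in_keys_iff)

lemma hcomp_homd_other: "homd e f \<Longrightarrow> e \<noteq> d \<Longrightarrow> hcomp d f = 0"
  by (rule poly_mapping_eqI) (auto simp: lookup_hcomp homd_def in_keys_iff)

lemma homd_hcomp: "homd d (hcomp d f)"
  by (auto simp: homd_def in_keys_iff lookup_hcomp split: if_splits)

lemma homd_mult: "homd k a \<Longrightarrow> homd e s \<Longrightarrow> homd (k + e) (a * (s :: _ \<Rightarrow>\<^sub>0 'b::comm_semiring_1))"
  unfolding homd_def using keys_mult[of a s] by (auto simp: degx_add)

lemma sum_hcomp: "finite K \<Longrightarrow> degx ` Poly_Mapping.keys f \<subseteq> K \<Longrightarrow> (\<Sum>k\<in>K. hcomp k f) = (f :: _ \<Rightarrow>\<^sub>0 'b::comm_monoid_add)"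
proof (rule poly_mapping_eqI)
  fix \<alpha> assume K: "finite K" "degx ` Poly_Mapping.keys f \<subseteq> K"
  have "(\<Sum>k\<in>K. Poly_Mapping.lookup (hcomp k f) \<alpha>) = (\<Sum>k\<in>K. if degx \<alpha> = k then Poly_Mapping.lookup f \<alpha> else 0)"
    by (simp add: lookup_hcomp)
  also have "\<dots> = (if degx \<alpha> \<in> K then Poly_Mapping.lookup f \<alpha> else 0)"
    using K(1) by (simp add: sum.delta)
  also have "\<dots> = Poly_Mapping.lookup f \<alpha>" using K(2) by (metis image_subset_iff in_keys_iff)
  finally show "Poly_Mapping.lookup (\<Sum>k\<in>K. hcomp k f) \<alpha> = Poly_Mapping.lookup f \<alpha>"
    by (simp add: lookup_sum)
qed

lemma hcomp_mult_homd:
  fixes c s :: "('n::finite \<Rightarrow>\<^sub>0 nat) \<Rightarrow>\<^sub>0 'b::comm_semiring_1"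
  assumes "homd e s"
  shows "hcomp d (c * s) = (if e \<le> d then hcomp (d - e) c * s else 0)"
proof -
  define K where "K = insert (d - e) (degx ` Poly_Mapping.keys c)"
  have fK: "finite K" unfolding K_def by simp
  have sc: "(\<Sum>k\<in>K. hcomp k c) = c" by (rule sum_hcomp[OF fK]) (auto simp: K_def)
  have "c * s = (\<Sum>k\<in>K. hcomp k c) * s" by (simp only: sc)
  also have "\<dots> = (\<Sum>k\<in>K. hcomp k c * s)" by (simp add: sum_distrib_right)
  finally have "hcomp d (c * s) = (\<Sum>k\<in>K. hcomp d (hcomp k c * s))" by (simp add: hcomp_sum)
  also have "\<dots> = (\<Sum>k\<in>K. if k + e = d then hcomp k c * s else 0)"
  proof (rule sum.cong[OF refl])
    fix k
    have h: "homd (k + e) (hcomp k c * s)" by (rule homd_mult[OF homd_hcomp assms])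
    show "hcomp d (hcomp k c * s) = (if k + e = d then hcomp k c * s else 0)"
      using hcomp_homd_same[OF h] hcomp_homd_other[OF h] by auto
  qed
  also have "\<dots> = (\<Sum>k\<in>K. if k = d - e then (if e \<le> d then hcomp k c * s else 0) else 0)"
    by (rule sum.cong[OF refl]) auto
  also have "\<dots> = (if e \<le> d then hcomp (d - e) c * s else 0)"
    using fK by (simp add: sum.delta K_def)
  finally show ?thesis .
qed


lemma homogeneous_poly_homd: "homogeneous_poly s \<Longrightarrow> \<exists>e. homd e s"
  unfolding homogeneous_poly_def homd_def degx_def by (auto simp: in_keys_iff)

lemma I_hcomp:
  fixes I :: "(('n::finite \<Rightarrow>\<^sub>0 nat) \<Rightarrow>\<^sub>0 'a::comm_ring_1) set"
  assumes "homogeneous_ideal I" "h \<in> I"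
  shows "hcomp d h \<in> I"
proof -
  obtain S where S: "\<forall>s\<in>S. homogeneous_poly s" "I = ideal_gen_in UNIV S"
    using assms(1) unfolding homogeneous_ideal_def by blast
  obtain F c where F: "finite F" "F \<subseteq> S" "h = (\<Sum>s\<in>F. c s * s)"
    using assms(2) S(2) unfolding ideal_gen_in_def by blast
  define e where "e s = (SOME e. homd e s)" for s :: "('n \<Rightarrow>\<^sub>0 nat) \<Rightarrow>\<^sub>0 'a"
  have he: "homd (e s) s" if "s \<in> F" for s
  proof -
    have "homogeneous_poly s" using S(1) F(2) that by blast
    then have "\<exists>e. homd e s" by (rule homogeneous_poly_homd)
    then show ?thesis unfolding e_def by (rule someI_ex)
  qed
  have "hcomp d h = (\<Sum>s\<in>F. hcomp d (c s * s))" by (simp add: F(3) hcomp_sum)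
  also have "\<dots> = (\<Sum>s\<in>F. (if e s \<le> d then hcomp (d - e s) (c s) else 0) * s)"
    by (rule sum.cong[OF refl]) (simp add: hcomp_mult_homd[OF he])
  finally have eq: "hcomp d h = (\<Sum>s\<in>F. (if e s \<le> d then hcomp (d - e s) (c s) else 0) * s)" .
  show ?thesis unfolding S(2) ideal_gen_in_def
    by (rule CollectI, rule exI[of _ F], rule exI[of _ "\<lambda>s. if e s \<le> d then hcomp (d - e s) (c s) else 0"])
       (simp add: F(1,2) eq)
qed

lemma P_hcomp:
  assumes "homogeneous_ideal I" "f \<in> pi_preimage nu p R I" "0 \<in> R"
  shows "hcomp d f \<in> pi_preimage nu p R I"
proof -
  obtain h where h: "h \<in> I" "f \<in> RTx R" "\<forall>\<alpha>. vconverges nu (\<lambda>m. \<Sum>\<beta><m. fps_nth (Poly_Mapping.lookup f \<alpha>) \<beta> * p ^ \<beta>) (Poly_Mapping.lookup h \<alpha>)"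
    using assms(2) unfolding pi_preimage_def by blast
  have "hcomp d f \<in> RTx R" using h(2) assms(3) by (auto simp: RTx_def lookup_hcomp)
  moreover have "hcomp d h \<in> I" by (rule I_hcomp[OF assms(1) h(1)])
  moreover have "vconverges nu (\<lambda>m. \<Sum>\<beta><m. fps_nth (Poly_Mapping.lookup (hcomp d f) \<alpha>) \<beta> * p ^ \<beta>) (Poly_Mapping.lookup (hcomp d h) \<alpha>)" for \<alpha>
  proof (cases "degx \<alpha> = d")
    case True then show ?thesis using h(3) by (simp add: lookup_hcomp)
  next
    case False then show ?thesis by (simp add: lookup_hcomp vconverges_def vclose_def)
  qed
  ultimately show ?thesis unfolding pi_preimage_def by blast
qed

lemma gen_mono: "S \<subseteq> T \<Longrightarrow> ideal_gen_in A S \<subseteq> ideal_gen_in A T"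
  unfolding ideal_gen_in_def by blast

lemma sum_closed: "finite X \<Longrightarrow> 0 \<in> A \<Longrightarrow> (\<forall>x\<in>A. \<forall>y\<in>A. x + y \<in> A) \<Longrightarrow> (\<forall>x\<in>X. f x \<in> A) \<Longrightarrow> sum f X \<in> A"
  by (induction X rule: finite_induct) auto

lemma gen_sums:
  fixes A :: "'b::comm_ring_1 set"
  assumes A0: "0 \<in> A" and Aadd: "\<forall>x\<in>A. \<forall>y\<in>A. x + y \<in> A"
    and G: "\<forall>g\<in>G. \<exists>F. finite F \<and> F \<subseteq> S \<and> g = \<Sum>F"
  shows "ideal_gen_in A G \<subseteq> ideal_gen_in A S"
proof
  fix y assume "y \<in> ideal_gen_in A G"
  then obtain F c where F: "finite F" "F \<subseteq> G" "\<forall>s\<in>F. c s \<in> A" "y = (\<Sum>s\<in>F. c s * s)"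
    unfolding ideal_gen_in_def by blast
  obtain Fg where Fg: "\<forall>g\<in>G. finite (Fg g) \<and> Fg g \<subseteq> S \<and> g = \<Sum>(Fg g)"
    using G by metis
  define U where "U = (\<Union>g\<in>F. Fg g)"
  have fU: "finite U" unfolding U_def using F Fg by auto
  have US: "U \<subseteq> S" unfolding U_def using F Fg by auto
  define c' where "c' s = (\<Sum>g\<in>F. if s \<in> Fg g then c g else 0)" for s
  have "y = (\<Sum>g\<in>F. c g * \<Sum>(Fg g))" unfolding F(4)
    by (rule sum.cong[OF refl]) (use F(2) Fg in auto)
  also have "\<dots> = (\<Sum>g\<in>F. \<Sum>s\<in>U. (if s \<in> Fg g then c g else 0) * s)"
  proof (rule sum.cong[OF refl])
    fix g assume g: "g \<in> F"
    have sub: "Fg g \<subseteq> U" unfolding U_def using g by auto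
    have "c g * \<Sum>(Fg g) = (\<Sum>s\<in>Fg g. (if s \<in> Fg g then c g else 0) * s)"
      by (simp add: sum_distrib_left)
    also have "\<dots> = (\<Sum>s\<in>U. (if s \<in> Fg g then c g else 0) * s)"
      by (rule sum.mono_neutral_left[OF fU sub]) auto
    finally show "c g * \<Sum>(Fg g) = (\<Sum>s\<in>U. (if s \<in> Fg g then c g else 0) * s)" .
  qed
  also have "\<dots> = (\<Sum>s\<in>U. c' s * s)"
    unfolding c'_def by (subst sum.swap) (simp add: sum_distrib_right)
  finally have y: "y = (\<Sum>s\<in>U. c' s * s)" .
  have "c' s \<in> A" for s unfolding c'_def
  proof (rule sum_closed[OF F(1) A0 Aadd], intro ballI)
    fix g assume "g \<in> F"
    then show "(if s \<in> Fg g then c g else 0) \<in> A" using F(3) A0 by simp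
  qed
  then show "y \<in> ideal_gen_in A S" unfolding ideal_gen_in_def
    by (intro CollectI exI[of _ U] exI[of _ c']) (simp add: fU US y)
qed


lemma poly_nz_coeff: "(q::'b::zero poly) \<noteq> 0 \<Longrightarrow> \<exists>\<beta>. coeff q \<beta> \<noteq> 0"
  by (metis leading_coeff_0_iff)

lemma init_hcomp:
  fixes f :: "('n::finite \<Rightarrow>\<^sub>0 nat) \<Rightarrow>\<^sub>0 'a::comm_ring_1 fps" and g :: "('n \<Rightarrow>\<^sub>0 nat) \<Rightarrow>\<^sub>0 'a poly"
  assumes ini: "is_initial_form w f g" and nz: "hcomp d g \<noteq> 0"
  shows "is_initial_form w (hcomp d f) (hcomp d g)"
proof -
  obtain \<alpha>0 where a0: "Poly_Mapping.lookup (hcomp d g) \<alpha>0 \<noteq> 0"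
    using nz by (metis poly_mapping_eqI lookup_zero)
  then have d0: "degx \<alpha>0 = d" and g0: "Poly_Mapping.lookup g \<alpha>0 \<noteq> 0"
    by (auto simp: lookup_hcomp split: if_splits)
  obtain \<beta>0 where b0: "coeff (Poly_Mapping.lookup g \<alpha>0) \<beta>0 \<noteq> 0" using poly_nz_coeff[OF g0] by blast
  have c0: "fps_nth (Poly_Mapping.lookup f \<alpha>0) \<beta>0 \<noteq> 0 \<and>
      (\<forall>\<alpha>' \<beta>'. fps_nth (Poly_Mapping.lookup f \<alpha>') \<beta>' \<noteq> 0 \<longrightarrow> vweight w \<beta>' \<alpha>' \<le> vweight w \<beta>0 \<alpha>0)"
    using b0 ini unfolding is_initial_form_def by (metis (no_types, lifting))
  show ?thesis unfolding is_initial_form_def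
  proof (intro allI)
    fix \<alpha> \<beta>
    show "coeff (Poly_Mapping.lookup (hcomp d g) \<alpha>) \<beta> =
      (if fps_nth (Poly_Mapping.lookup (hcomp d f) \<alpha>) \<beta> \<noteq> 0 \<and>
          (\<forall>\<alpha>' \<beta>'. fps_nth (Poly_Mapping.lookup (hcomp d f) \<alpha>') \<beta>' \<noteq> 0 \<longrightarrow> vweight w \<beta>' \<alpha>' \<le> vweight w \<beta> \<alpha>)
       then fps_nth (Poly_Mapping.lookup (hcomp d f) \<alpha>) \<beta> else 0)"
    proof (cases "degx \<alpha> = d")
      case False then show ?thesis by (simp add: lookup_hcomp)
    next
      case True
      have eq: "(fps_nth (Poly_Mapping.lookup f \<alpha>) \<beta> \<noteq> 0 \<and>
          (\<forall>\<alpha>' \<beta>'. fps_nth (Poly_Mapping.lookup f \<alpha>') \<beta>' \<noteq> 0 \<longrightarrow> vweight w \<beta>' \<alpha>' \<le> vweight w \<beta> \<alpha>)) =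
        (fps_nth (Poly_Mapping.lookup f \<alpha>) \<beta> \<noteq> 0 \<and>
          (\<forall>\<alpha>' \<beta>'. fps_nth (Poly_Mapping.lookup (hcomp d f) \<alpha>') \<beta>' \<noteq> 0 \<longrightarrow> vweight w \<beta>' \<alpha>' \<le> vweight w \<beta> \<alpha>))"
      proof (intro iffI conjI)
        assume H: "fps_nth (Poly_Mapping.lookup f \<alpha>) \<beta> \<noteq> 0 \<and>
          (\<forall>\<alpha>' \<beta>'. fps_nth (Poly_Mapping.lookup (hcomp d f) \<alpha>') \<beta>' \<noteq> 0 \<longrightarrow> vweight w \<beta>' \<alpha>' \<le> vweight w \<beta> \<alpha>)"
        then show "fps_nth (Poly_Mapping.lookup f \<alpha>) \<beta> \<noteq> 0" by simp
        have "vweight w \<beta>0 \<alpha>0 \<le> vweight w \<beta> \<alpha>"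
          using H c0 d0 by (auto simp: lookup_hcomp)
        then show "\<forall>\<alpha>' \<beta>'. fps_nth (Poly_Mapping.lookup f \<alpha>') \<beta>' \<noteq> 0 \<longrightarrow> vweight w \<beta>' \<alpha>' \<le> vweight w \<beta> \<alpha>"
          using c0 by fastforce
      qed (auto simp: lookup_hcomp split: if_splits)
      have "coeff (Poly_Mapping.lookup (hcomp d g) \<alpha>) \<beta> = coeff (Poly_Mapping.lookup g \<alpha>) \<beta>"
        using True by (simp add: lookup_hcomp)
      also have "\<dots> = (if fps_nth (Poly_Mapping.lookup f \<alpha>) \<beta> \<noteq> 0 \<and>
          (\<forall>\<alpha>' \<beta>'. fps_nth (Poly_Mapping.lookup f \<alpha>') \<beta>' \<noteq> 0 \<longrightarrow> vweight w \<beta>' \<alpha>' \<le> vweight w \<beta> \<alpha>)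
       then fps_nth (Poly_Mapping.lookup f \<alpha>) \<beta> else 0)"
        using ini unfolding is_initial_form_def by blast
      finally have X: "coeff (Poly_Mapping.lookup (hcomp d g) \<alpha>) \<beta> = (if fps_nth (Poly_Mapping.lookup f \<alpha>) \<beta> \<noteq> 0 \<and>
          (\<forall>\<alpha>' \<beta>'. fps_nth (Poly_Mapping.lookup f \<alpha>') \<beta>' \<noteq> 0 \<longrightarrow> vweight w \<beta>' \<alpha>' \<le> vweight w \<beta> \<alpha>)
       then fps_nth (Poly_Mapping.lookup f \<alpha>) \<beta> else 0)" .
      have rhs: "Poly_Mapping.lookup (hcomp d f) \<alpha> = Poly_Mapping.lookup f \<alpha>" by (simp add: lookup_hcomp True)
      show ?thesis using X unfolding rhs eq .
    qed
  qed
qed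

lemma weight_identity:
  fixes w :: "'n::finite \<Rightarrow> real"
  shows "real \<beta> + (\<Sum>i\<in>UNIV. (b - w i) * real (Poly_Mapping.lookup \<alpha> i)) = b * real (degx \<alpha>) - vweight w \<beta> \<alpha>"
  unfolding vweight_def degx_def
  by (simp add: algebra_simps sum_subtractf sum_distrib_left)

lemma init_whom:
  fixes f :: "('n::finite \<Rightarrow>\<^sub>0 nat) \<Rightarrow>\<^sub>0 'a::comm_ring_1 fps" and g :: "('n \<Rightarrow>\<^sub>0 nat) \<Rightarrow>\<^sub>0 'a poly"
  assumes ini: "is_initial_form w (hcomp d f) g"
  shows "weighted_homogeneous_poly 1 (\<lambda>i. b - w i) g"
proof -
  have key: "degx \<alpha> = d \<and> fps_nth (Poly_Mapping.lookup (hcomp d f) \<alpha>) \<beta> \<noteq> 0 \<and>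
      (\<forall>\<alpha>' \<beta>'. fps_nth (Poly_Mapping.lookup (hcomp d f) \<alpha>') \<beta>' \<noteq> 0 \<longrightarrow> vweight w \<beta>' \<alpha>' \<le> vweight w \<beta> \<alpha>)"
    if "coeff (Poly_Mapping.lookup g \<alpha>) \<beta> \<noteq> 0" for \<alpha> \<beta>
  proof -
    have C: "fps_nth (Poly_Mapping.lookup (hcomp d f) \<alpha>) \<beta> \<noteq> 0 \<and>
      (\<forall>\<alpha>' \<beta>'. fps_nth (Poly_Mapping.lookup (hcomp d f) \<alpha>') \<beta>' \<noteq> 0 \<longrightarrow> vweight w \<beta>' \<alpha>' \<le> vweight w \<beta> \<alpha>)"
      using that ini unfolding is_initial_form_def by (metis (no_types, lifting))
    then have "degx \<alpha> = d" by (auto simp: lookup_hcomp split: if_splits)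
    with C show ?thesis by blast
  qed
  show ?thesis unfolding weighted_homogeneous_poly_def
  proof (cases "\<exists>\<alpha> \<beta>. coeff (Poly_Mapping.lookup g \<alpha>) \<beta> \<noteq> 0")
    case False then show "\<exists>D. \<forall>\<alpha> \<beta>. coeff (Poly_Mapping.lookup g \<alpha>) \<beta> \<noteq> 0 \<longrightarrow>
       1 * real \<beta> + (\<Sum>i\<in>UNIV. (b - w i) * real (Poly_Mapping.lookup \<alpha> i)) = D" by blast
  next
    case True
    then obtain \<alpha>0 \<beta>0 where z0: "coeff (Poly_Mapping.lookup g \<alpha>0) \<beta>0 \<noteq> 0" by blast
    show "\<exists>D. \<forall>\<alpha> \<beta>. coeff (Poly_Mapping.lookup g \<alpha>) \<beta> \<noteq> 0 \<longrightarrow>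
       1 * real \<beta> + (\<Sum>i\<in>UNIV. (b - w i) * real (Poly_Mapping.lookup \<alpha> i)) = D"
    proof (intro exI allI impI)
      fix \<alpha> \<beta> assume z: "coeff (Poly_Mapping.lookup g \<alpha>) \<beta> \<noteq> 0"
      have "vweight w \<beta> \<alpha> = vweight w \<beta>0 \<alpha>0" using key[OF z] key[OF z0]
        by (meson order_antisym)
      moreover have "degx \<alpha> = degx \<alpha>0" using key[OF z] key[OF z0] by simp
      ultimately show "1 * real \<beta> + (\<Sum>i\<in>UNIV. (b - w i) * real (Poly_Mapping.lookup \<alpha> i)) =
         b * real (degx \<alpha>0) - vweight w \<beta>0 \<alpha>0"
        by (simp add: weight_identity)
    qed
  qed
qed

lemma init_RtX:
  assumes "f \<in> RTx R" "0 \<in> R" "is_initial_form w f g"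
  shows "g \<in> RtX R"
  using assms unfolding RTx_def RtX_def is_initial_form_def by auto

lemma decomp:
  fixes g :: "('n::finite \<Rightarrow>\<^sub>0 nat) \<Rightarrow>\<^sub>0 'b::comm_monoid_add"
  shows "\<exists>F. finite F \<and> F \<subseteq> {hcomp d g |d. hcomp d g \<noteq> 0} \<and> g = \<Sum>F"
proof -
  define D where "D = degx ` Poly_Mapping.keys g"
  have fD: "finite D" unfolding D_def by simp
  have nz: "hcomp d g \<noteq> 0" if dD: "d \<in> D" for d
  proof -
    obtain \<alpha> where "\<alpha> \<in> Poly_Mapping.keys g" "degx \<alpha> = d" using dD unfolding D_def by blast
    then have "Poly_Mapping.lookup (hcomp d g) \<alpha> \<noteq> 0" by (simp add: lookup_hcomp in_keys_iff)
    then show ?thesis by auto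
  qed
  have inj: "inj_on (\<lambda>d. hcomp d g) D"
  proof (rule inj_onI)
    fix d d' assume "d \<in> D" "d' \<in> D" "hcomp d g = hcomp d' g"
    then obtain \<alpha> where "\<alpha> \<in> Poly_Mapping.keys g" "degx \<alpha> = d" "hcomp d g = hcomp d' g" using D_def by blast
    then have "Poly_Mapping.lookup (hcomp d' g) \<alpha> \<noteq> 0" by (metis lookup_hcomp in_keys_iff)
    then show "d = d'" using \<open>degx \<alpha> = d\<close> by (simp add: lookup_hcomp split: if_splits)
  qed
  have "\<Sum>((\<lambda>d. hcomp d g) ` D) = (\<Sum>d\<in>D. hcomp d g)" by (simp add: sum.reindex[OF inj])
  also have "\<dots> = g" by (rule sum_hcomp[OF fD]) (simp add: D_def)
  finally show ?thesis using fD nz by (intro exI[of _ "(\<lambda>d. hcomp d g) ` D"]) auto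
qed


theorem lemma5p2:
  fixes nu :: "'a::field \<Rightarrow> int" and p :: 'a and R :: "'a set"
    and I :: "(('n::finite \<Rightarrow>\<^sub>0 nat) \<Rightarrow>\<^sub>0 'a) set" and w :: "'n \<Rightarrow> real"
  assumes "discrete_valuation nu" and "vcomplete nu" and "uniformizer nu p"
    and "R \<subseteq> val_ring nu" and "noetherian_subring R" and "dense_in_val_ring nu R" and "p \<in> R"
    and "homogeneous_ideal I"
  shows "\<exists>u0 (u :: 'n \<Rightarrow> real). u0 > 0 \<and> (\<forall>i. u i > 0) \<and>
           weighted_homogeneous_ideal R u0 u (initial_ideal R w (pi_preimage nu p R I))"
proof -
  have R0: "0 \<in> R" and Radd: "\<forall>x\<in>R. \<forall>y\<in>R. x + y \<in> R"
    using assms(5) unfolding noetherian_subring_def is_subring_def by auto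
  define P where "P = pi_preimage nu p R I"
  define b where "b = (\<Sum>i\<in>UNIV. \<bar>w i\<bar>) + 1"
  have upos: "b - w i > 0" for i
  proof -
    have "\<bar>w i\<bar> \<le> (\<Sum>i\<in>UNIV. \<bar>w i\<bar>)" by (rule member_le_sum) auto
    then show ?thesis unfolding b_def by linarith
  qed
  define G where "G = {g. \<exists>f\<in>P. is_initial_form w f g}"
  define S where "S = {g. \<exists>f\<in>P. \<exists>d. is_initial_form w (hcomp d f) g}"
  have RtX0: "0 \<in> RtX R" using R0 by (simp add: RtX_def)
  have RtXadd: "\<forall>x\<in>RtX R. \<forall>y\<in>RtX R. x + y \<in> RtX R"
    using Radd by (simp add: RtX_def lookup_add)
  have PR: "f \<in> RTx R" if "f \<in> P" for f using that unfolding P_def pi_preimage_def by blast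
  have hP: "hcomp d f \<in> P" if "f \<in> P" for f d
    using P_hcomp[OF assms(8) _ R0] that unfolding P_def by blast
  have Sobt: "\<exists>f d. f \<in> P \<and> is_initial_form w (hcomp d f) g" if "g \<in> S" for g
    using that unfolding S_def by blast
  have SG: "S \<subseteq> G"
  proof
    fix g assume "g \<in> S"
    then obtain f d where "f \<in> P" "is_initial_form w (hcomp d f) g" using Sobt by blast
    then show "g \<in> G" unfolding G_def using hP by blast
  qed
  have SR: "S \<subseteq> RtX R"
  proof
    fix g assume "g \<in> S"
    then obtain f d where f: "f \<in> P" "is_initial_form w (hcomp d f) g" using Sobt by blast
    show "g \<in> RtX R" by (rule init_RtX[OF PR[OF hP[OF f(1)]] R0 f(2)])
  qed
  have Sh: "\<forall>s\<in>S. weighted_homogeneous_poly 1 (\<lambda>i. b - w i) s"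
  proof
    fix g assume "g \<in> S"
    then obtain f d where f: "f \<in> P" "is_initial_form w (hcomp d f) g" using Sobt by blast
    show "weighted_homogeneous_poly 1 (\<lambda>i. b - w i) g" by (rule init_whom[OF f(2)])
  qed
  have GS: "\<forall>g\<in>G. \<exists>F. finite F \<and> F \<subseteq> S \<and> g = \<Sum>F"
  proof
    fix g assume "g \<in> G"
    then obtain f where f: "f \<in> P" "is_initial_form w f g" unfolding G_def by blast
    obtain F where F: "finite F" "F \<subseteq> {hcomp d g |d. hcomp d g \<noteq> 0}" "g = \<Sum>F"
      using decomp[of g] by blast
    have "F \<subseteq> S"
    proof
      fix s assume "s \<in> F"
      then obtain d where d: "s = hcomp d g" "hcomp d g \<noteq> 0" using F(2) by blast
      have "is_initial_form w (hcomp d f) s" using init_hcomp[OF f(2) d(2)] d(1) by simp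
      then show "s \<in> S" unfolding S_def using f(1) by blast
    qed
    then show "\<exists>F. finite F \<and> F \<subseteq> S \<and> g = \<Sum>F" using F by blast
  qed
  have i1: "initial_ideal R w P = ideal_gen_in (RtX R) G" by (simp add: initial_ideal_def G_def)
  have "initial_ideal R w P = ideal_gen_in (RtX R) S"
    unfolding i1 by (rule subset_antisym[OF gen_sums[OF RtX0 RtXadd GS] gen_mono[OF SG]])
  then have "weighted_homogeneous_ideal R 1 (\<lambda>i. b - w i) (initial_ideal R w P)"
    unfolding weighted_homogeneous_ideal_def using SR Sh by blast
  then show ?thesis using upos unfolding P_def by (intro exI[of _ 1] exI[of _ "\<lambda>i. b - w i"]) auto
qed

end
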